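(* Let $Y$ be a real random variable with $\chi^2(Y,\mathcal N)<\infty$, and let $J$ be a set of positive integers such that $\mathbb{E}H_n(Y)=0$ for all $n\in J$. If \[ \chi^2(Y,\mathcal N)<\inf_{x>0}\frac{(e^{x/2}-1)^2}{e^x-1-\sum_{n\in J}\frac{x^n}{n!}}, \] then $\mathbb{E}e^{tY}<e^{t^2}$ for all real $t\neq0$.
   Context: $\varphi(x)=e^{-x^2/2}/\sqrt{2\pi}$. For a real random variable $Y$ with density $p$, $\chi^2(Y,\mathcal N)=\int_{-\infty}^{\infty}\left(\frac{p(x)}{\varphi(x)}-1\right)^2\varphi(x)\,dx$ (taken to be $+\infty$ if $Y$ has no density). Hermite polynomials $H_n$ are defined by $\sum_{n\geqslant0}\frac{H_n(x)}{n!}z^n=e^{xz-z^2/2}$. *)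

theory Defs
  imports "HOL-Probability.Probability"
begin

definition std_normal_density :: "real \<Rightarrow> real" where
  "std_normal_density x = exp (- (x^2) / 2) / sqrt (2 * pi)"

text \<open>Hermite polynomials via the generating function
  sum_n H_n(x) z^n / n! = exp(x z - z^2/2): H_n(x) is the n-th z-derivative at z = 0.\<close>
definition hermite :: "nat \<Rightarrow> real \<Rightarrow> real" where
  "hermite n x = (deriv ^^ n) (\<lambda>z::real. exp (x * z - z^2 / 2)) 0"

definition chi2_density :: "(real \<Rightarrow> real) \<Rightarrow> ennreal" where
  "chi2_density p =
     (\<integral>\<^sup>+ x. ennreal ((p x / std_normal_density x - 1)^2 * std_normal_density x) \<partial>lborel)"

definition threshold_ratio :: "nat set \<Rightarrow> real \<Rightarrow> ennreal" where
  "threshold_ratio J x =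
     (let D = exp x - 1 - (\<Sum>n. if n \<in> J then x ^ n / fact n else 0)
      in if D = 0 then \<infinity> else ennreal ((exp (x/2) - 1)^2 / D))"

end

theory Submission
  imports Defs "HOL-Computational_Algebra.Polynomial"
begin


fun He :: "nat \<Rightarrow> real poly" where
  "He 0 = 1"
| "He (Suc 0) = [:0, 1:]"
| "He (Suc (Suc n)) = [:0, 1:] * He (Suc n) - smult (real (Suc n)) (He n)"

lemma pderiv_He: "pderiv (He (Suc n)) = smult (real (Suc n)) (He n)"
proof (induction n rule: nat_less_induct)
  case (1 n)
  show ?case
  proof (cases n)
    case 0 then show ?thesis by (simp add: pderiv_pCons)
  next
    case (Suc m)
    have ih1: "pderiv (He (Suc m)) = smult (real (Suc m)) (He m)" using 1 Suc by auto
    have "pderiv (He (Suc (Suc m))) = He (Suc m) + [:0,1:] * smult (real (Suc m)) (He m)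
         - smult (real (Suc m)) (pderiv (He m))"
      by (simp add: pderiv_mult pderiv_diff pderiv_smult ih1 pderiv_pCons algebra_simps)
    also have "\<dots> = smult (real (Suc (Suc m))) (He (Suc m))"
    proof (cases m)
      case 0 then show ?thesis by (simp add: pderiv_pCons)
    next
      case (Suc k)
      have "pderiv (He m) = smult (real m) (He k)" using 1 Suc \<open>n = Suc m\<close> by auto
      then show ?thesis using Suc
        by (simp only: poly_eq_poly_eq_iff[symmetric] fun_eq_iff) (simp add: algebra_simps)
    qed
    finally show ?thesis using Suc by simp
  qed
qed

lemma He_Suc: "He (Suc n) = [:0,1:] * He n - pderiv (He n)"
  by (cases n) (auto simp: pderiv_He)

lemma deriv_iter_gen:
  "(deriv ^^ n) (\<lambda>z. exp (y * z - z^2 / 2)) = (\<lambda>z. poly (He n) (y - z) * exp (y * z - z^2 / 2))"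
proof (induction n)
  case 0 then show ?case by simp
next
  case (Suc n)
  have "((\<lambda>z. poly (He n) (y - z) * exp (y * z - z^2 / 2)) has_real_derivative
        poly (He (Suc n)) (y - z) * exp (y * z - z^2 / 2)) (at z)" for z
  proof -
    have d1: "((\<lambda>z. y - z) has_real_derivative -1) (at z)"
      by (auto intro!: derivative_eq_intros)
    have d2: "((\<lambda>z. poly (He n) (y - z)) has_real_derivative poly (pderiv (He n)) (y - z) * -1) (at z)"
      by (rule DERIV_chain2[OF poly_DERIV d1])
    have d3: "((\<lambda>z. exp (y * z - z^2 / 2)) has_real_derivative exp (y * z - z^2 / 2) * (y - z)) (at z)"
      by (auto intro!: derivative_eq_intros)
    have "((\<lambda>z. poly (He n) (y - z) * exp (y * z - z^2 / 2)) has_real_derivative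
        poly (pderiv (He n)) (y - z) * -1 * exp (y * z - z^2 / 2) + (exp (y * z - z^2 / 2) * (y - z)) * poly (He n) (y - z)) (at z)"
      by (rule DERIV_mult[OF d2 d3])
    moreover have "poly (pderiv (He n)) (y - z) * -1 * exp (y * z - z^2 / 2) + (exp (y * z - z^2 / 2) * (y - z)) * poly (He n) (y - z)
       = poly (He (Suc n)) (y - z) * exp (y * z - z^2 / 2)"
      by (simp add: He_Suc algebra_simps)
    ultimately show ?thesis by simp
  qed
  then have "deriv (\<lambda>z. poly (He n) (y - z) * exp (y * z - z^2 / 2)) = (\<lambda>z. poly (He (Suc n)) (y - z) * exp (y * z - z^2 / 2))"
    by (intro ext DERIV_imp_deriv)
  then show ?case using Suc.IH by simp
qed

lemma hermite_He: "hermite n y = poly (He n) y"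
  unfolding hermite_def deriv_iter_gen by simp




lemma std_normal_density_eq: "Defs.std_normal_density x = normal_density 0 1 x"
  by (simp add: Defs.std_normal_density_def normal_density_def)

lemma poly_sum_le: fixes q :: "real poly" assumes "degree q \<le> N" shows "poly q y = (\<Sum>i\<le>N. coeff q i * y ^ i)"
proof -
  have "(\<Sum>i\<le>degree q. coeff q i * y ^ i) = (\<Sum>i\<le>N. coeff q i * y ^ i)"
    by (rule sum.mono_neutral_left) (use assms in \<open>auto simp: coeff_eq_0\<close>)
  then show ?thesis unfolding poly_altdef .
qed

lemma integrable_poly_normal: "integrable lborel (\<lambda>y. poly q y * normal_density 0 1 y)"
proof -
  have "(\<lambda>y. poly q y * normal_density 0 1 y) = (\<lambda>y. \<Sum>i\<le>degree q. coeff q i * (normal_density 0 1 y * y ^ i))"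
    by (simp add: poly_altdef sum_distrib_left mult_ac)
  moreover have "integrable lborel (\<lambda>y. \<Sum>i\<le>degree q. coeff q i * (normal_density 0 1 y * y ^ i))"
    by (intro Bochner_Integration.integrable_sum integrable_mult_right integrable_std_normal_moment)
  ultimately show ?thesis by simp
qed

definition mom :: "nat \<Rightarrow> real" where
  "mom k = (\<integral>y. normal_density 0 1 y * y ^ k \<partial>lborel)"

lemma mom_0: "mom 0 = 1"
  using integral_std_normal_moment_even[of 0] by (simp add: mom_def)

lemma mom_1: "mom 1 = 0"
  using integral_std_normal_moment_odd[of 0] by (simp add: mom_def)

lemma mom_Suc0: "mom (Suc 0) = 0"
  using mom_1 by simp

lemma mom_SS: "mom (Suc (Suc k)) = real (Suc k) * mom k"
proof (cases "even k")
  case True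
  then obtain j where k: "k = 2 * j" by (auto elim: evenE)
  have a: "mom (Suc (Suc k)) = fact (2 * Suc j) / (2 ^ Suc j * fact (Suc j))"
    using integral_std_normal_moment_even[of "Suc j"] by (simp add: mom_def k)
  have b: "mom k = fact (2 * j) / (2 ^ j * fact j)"
    using integral_std_normal_moment_even[of j] by (simp add: mom_def k)
  have f1: "fact (2 * Suc j) = (real (2 * j + 2) * real (2 * j + 1)) * (fact (2 * j) :: real)"
    by (simp add: fact_Suc algebra_simps)
  have f2: "fact (Suc j) = real (j + 1) * (fact j :: real)" by simp
  have "mom (Suc (Suc k)) = (real (2 * j + 2) * real (2 * j + 1)) * fact (2 * j) / (2 * 2 ^ j * (real (j + 1) * fact j))"
    unfolding a f1 f2 by simp
  also have "\<dots> = real (2 * j + 1) * (fact (2 * j) / (2 ^ j * fact j))"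
  proof -
    have e: "real (2 * j + 2) = real (j + 1) * 2" by simp
    have "(real (2 * j + 2) * real (2 * j + 1)) * fact (2 * j) / (2 * 2 ^ j * (real (j + 1) * fact j)) = (real (j + 1) * 2) * (real (2 * j + 1) * fact (2 * j)) / ((real (j + 1) * 2) * (2 ^ j * fact j))"
      unfolding e by (simp only: mult_ac)
    also have "\<dots> = real (2 * j + 1) * fact (2 * j) / (2 ^ j * fact j)"
      by (rule mult_divide_mult_cancel_left) simp
    finally show ?thesis by simp
  qed
  finally show ?thesis using b k by simp
next
  case False
  then obtain j where k: "k = 2 * j + 1" by (auto elim: oddE)
  have a: "mom (Suc (Suc k)) = 0"
    using integral_std_normal_moment_odd[of "Suc j"] by (simp add: mom_def k)
  have b: "mom k = 0"
    using integral_std_normal_moment_odd[of j] by (simp add: mom_def k)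
  show ?thesis using a b by simp
qed

definition Lt :: "real \<Rightarrow> real poly \<Rightarrow> real" where
  "Lt t q = (\<integral>y. exp (t * y) * poly q y * normal_density 0 1 y \<partial>lborel)"

lemma Lt0_sum: assumes "degree q \<le> N" shows "Lt 0 q = (\<Sum>i\<le>N. coeff q i * mom i)"
proof -
  have "Lt 0 q = (\<integral>y. (\<Sum>i\<le>N. coeff q i * (normal_density 0 1 y * y ^ i)) \<partial>lborel)"
    unfolding Lt_def using poly_sum_le[OF assms]
    by (intro Bochner_Integration.integral_cong) (auto simp: sum_distrib_left mult_ac)
  also have "\<dots> = (\<Sum>i\<le>N. coeff q i * mom i)"
    by (subst Bochner_Integration.integral_sum) (auto intro!: integrable_mult_right integrable_std_normal_moment simp: mom_def)
  finally show ?thesis .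
qed

lemma Lt0_IBP: "Lt 0 (pCons 0 q) = Lt 0 (pderiv q)"
proof -
  define d where "d = degree q"
  have "Lt 0 (pCons 0 q) = (\<Sum>i\<le>Suc (Suc d). coeff (pCons 0 q) i * mom i)"
    by (rule Lt0_sum) (simp add: d_def degree_pCons_le)
  also have "\<dots> = (\<Sum>i\<le>Suc d. coeff q i * mom (Suc i))"
    by (subst sum.atMost_Suc_shift) simp
  also have "\<dots> = (\<Sum>i\<le>d. coeff q (Suc i) * mom (Suc (Suc i)))"
    by (subst sum.atMost_Suc_shift) (simp add: mom_Suc0)
  also have "\<dots> = (\<Sum>i\<le>d. coeff (pderiv q) i * mom i)"
    by (intro sum.cong) (auto simp: coeff_pderiv mom_SS)
  also have "\<dots> = Lt 0 (pderiv q)"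
    by (rule Lt0_sum[symmetric]) (simp add: d_def degree_pderiv)
  finally show ?thesis .
qed

lemma exp_normal_shift: "exp (t * y) * normal_density 0 1 y = exp (t^2 / 2) * normal_density 0 1 (y - t)"
proof -
  have e: "t * y + - (y^2) / 2 = t^2 / 2 + - ((y - t)^2) / 2"
    by (simp add: power2_eq_square field_simps)
  have "exp (t * y) * exp (- (y^2) / 2) = exp (t^2 / 2) * exp (- ((y - t)^2) / 2)"
    unfolding mult_exp_exp e ..
  then show ?thesis unfolding normal_density_def by (simp add: mult_ac)
qed

lemma Lt_fun_eq: "(\<lambda>y. exp (t * y) * poly q y * normal_density 0 1 y) =
   (\<lambda>y. exp (t^2 / 2) * (poly q y * normal_density 0 1 (y - t)))"
  using exp_normal_shift[of t] by (auto simp: fun_eq_iff algebra_simps)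

lemma integrable_Lt: "integrable lborel (\<lambda>y. exp (t * y) * poly q y * normal_density 0 1 y)"
proof -
  have "integrable lborel (\<lambda>x. poly q (t + 1 * x) * normal_density 0 1 (t + 1 * x - t))"
    using integrable_poly_normal[of "pcompose q [:t, 1:]"] by (simp add: poly_pcompose algebra_simps)
  then have "integrable lborel (\<lambda>y. poly q y * normal_density 0 1 (y - t))"
    by (subst (asm) lborel_integrable_real_affine_iff) auto
  then show ?thesis unfolding Lt_fun_eq by (rule integrable_mult_right)
qed

lemma Lt_shift: "Lt t q = exp (t^2 / 2) * Lt 0 (pcompose q [:t, 1:])"
proof -
  have "Lt t q = exp (t^2 / 2) * (\<integral>y. poly q y * normal_density 0 1 (y - t) \<partial>lborel)"
    unfolding Lt_def Lt_fun_eq by simp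
  also have "(\<integral>y. poly q y * normal_density 0 1 (y - t) \<partial>lborel) =
     (\<integral>x. poly q (t + 1 * x) * normal_density 0 1 (t + 1 * x - t) \<partial>lborel)"
    using lborel_integral_real_affine[of 1 "\<lambda>y. poly q y * normal_density 0 1 (y - t)" t] by simp
  also have "\<dots> = Lt 0 (pcompose q [:t, 1:])"
    unfolding Lt_def by (simp add: poly_pcompose algebra_simps)
  finally show ?thesis .
qed

lemma Lt_add: "Lt t (p + q) = Lt t p + Lt t q"
proof -
  have "(\<lambda>y. exp (t * y) * poly (p + q) y * normal_density 0 1 y) =
     (\<lambda>y. exp (t * y) * poly p y * normal_density 0 1 y + exp (t * y) * poly q y * normal_density 0 1 y)"
    by (simp add: fun_eq_iff algebra_simps)
  then show ?thesis unfolding Lt_def by (simp add: Bochner_Integration.integral_add[OF integrable_Lt integrable_Lt])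
qed

lemma Lt_diff: "Lt t (p - q) = Lt t p - Lt t q"
proof -
  have "(\<lambda>y. exp (t * y) * poly (p - q) y * normal_density 0 1 y) =
     (\<lambda>y. exp (t * y) * poly p y * normal_density 0 1 y - exp (t * y) * poly q y * normal_density 0 1 y)"
    by (simp add: fun_eq_iff algebra_simps)
  then show ?thesis unfolding Lt_def by (simp add: Bochner_Integration.integral_diff[OF integrable_Lt integrable_Lt])
qed

lemma Lt_smult: "Lt t (smult c p) = c * Lt t p"
proof -
  have "(\<lambda>y. exp (t * y) * poly (smult c p) y * normal_density 0 1 y) =
     (\<lambda>y. c * (exp (t * y) * poly p y * normal_density 0 1 y))"
    by (simp add: fun_eq_iff algebra_simps)
  then show ?thesis unfolding Lt_def by simp
qed

lemma Lt_zero[simp]: "Lt t 0 = 0"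
  unfolding Lt_def by simp

lemma Lt_sum: "finite A \<Longrightarrow> Lt t (\<Sum>i\<in>A. f i) = (\<Sum>i\<in>A. Lt t (f i))"
  by (induction A rule: finite_induct) (auto simp: Lt_add)

lemma Lt_one: "Lt t 1 = exp (t^2 / 2)"
proof -
  have "Lt 0 1 = mom 0" using Lt0_sum[of 1 0] by simp
  moreover have "pcompose 1 [:t, 1:] = (1 :: real poly)" by (simp add: one_pCons pcompose_pCons)
  ultimately show ?thesis using Lt_shift[of t 1] by (simp add: mom_0)
qed

lemma Lt_IBP: "Lt t (pCons 0 q) = Lt t (pderiv q) + t * Lt t q"
proof -
  define r where "r = pcompose q [:t, 1:]"
  have "pcompose (pCons 0 q) [:t, 1:] = pCons 0 r + smult t r"
    by (simp add: r_def pcompose_pCons algebra_simps)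
  moreover have "pderiv r = pcompose (pderiv q) [:t, 1:]"
    by (simp add: r_def pderiv_pcompose pderiv_pCons)
  ultimately show ?thesis
    by (simp add: Lt_shift[of t] Lt_add Lt_smult Lt0_IBP algebra_simps r_def[symmetric])
qed

lemma Lt_He_Suc: "Lt t (He (Suc n) * q) = Lt t (He n * pderiv q) + t * Lt t (He n * q)"
proof -
  have e: "He (Suc n) * q = pCons 0 (He n * q) - pderiv (He n) * q"
    by (simp add: He_Suc algebra_simps)
  have "Lt t (He (Suc n) * q) = Lt t (pCons 0 (He n * q)) - Lt t (pderiv (He n) * q)"
    unfolding e by (rule Lt_diff)
  also have "\<dots> = Lt t (pderiv (He n * q)) + t * Lt t (He n * q) - Lt t (pderiv (He n) * q)"
    by (simp only: Lt_IBP)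
  also have "pderiv (He n * q) = He n * pderiv q + pderiv (He n) * q"
    by (simp add: pderiv_mult mult.commute)
  also have "Lt t (He n * pderiv q + pderiv (He n) * q) = Lt t (He n * pderiv q) + Lt t (pderiv (He n) * q)"
    by (rule Lt_add)
  finally show ?thesis by linarith
qed

lemma Lt_He: "Lt t (He n) = t ^ n * exp (t^2 / 2)"
proof (induction n)
  case 0 then show ?case by (simp add: Lt_one)
next
  case (Suc n)
  have "Lt t (He (Suc n)) = Lt t (He n * pderiv 1) + t * Lt t (He n)"
    using Lt_He_Suc[of t n 1] by (simp only: mult_1_right)
  also have "Lt t (He n * pderiv 1) = 0" by simp
  finally show ?case using Suc.IH by simp
qed

lemma L_He_mult: "Lt 0 (He n * q) = Lt 0 ((pderiv ^^ n) q)"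
proof (induction n arbitrary: q)
  case 0 then show ?case by simp
next
  case (Suc n)
  then show ?case using Lt_He_Suc[of 0 n q] by (simp add: funpow_Suc_right del: funpow.simps)
qed

lemma pderiv_iter_smult: "(pderiv ^^ k) (smult c p) = smult c ((pderiv ^^ k) p)"
  by (induction k) (auto simp: pderiv_smult)

lemma pderiv_iter_zero: "(pderiv ^^ k) 0 = (0 :: real poly)"
  by (induction k) auto

lemma pderiv_iter_He: "(pderiv ^^ k) (He (m + k)) = smult (fact (m + k) / fact m) (He m)"
proof (induction k)
  case 0 then show ?case by simp
next
  case (Suc k)
  have "(pderiv ^^ Suc k) (He (m + Suc k)) = (pderiv ^^ k) (pderiv (He (Suc (m + k))))"
    by (simp add: funpow_Suc_right del: funpow.simps)
  also have "\<dots> = smult (real (Suc (m + k)) * (fact (m + k) / fact m)) (He m)"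
    by (simp add: pderiv_He pderiv_iter_smult Suc)
  also have "real (Suc (m + k)) * (fact (m + k) / fact m) = fact (m + Suc k) / fact m"
    by (simp add: fact_Suc)
  finally show ?case .
qed

lemma pderiv_iter_He_gt: assumes "m < k" shows "(pderiv ^^ k) (He m) = 0"
proof -
  obtain j where "k = Suc (m + j)" using less_imp_Suc_add[OF assms] by blast
  then have k: "k = Suc j + m" by simp
  have kk: "(pderiv ^^ k) = (pderiv ^^ Suc j) \<circ> (pderiv ^^ m)"
    unfolding k by (rule funpow_add)
  have "(pderiv ^^ k) (He m) = (pderiv ^^ Suc j) ((pderiv ^^ m) (He (0 + m)))"
    unfolding kk comp_apply add_0 by (rule refl)
  also have "(pderiv ^^ m) (He (0 + m)) = [:fact m:]"
    using pderiv_iter_He[of m 0] by simp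
  also have "(pderiv ^^ Suc j) [:fact m:] = 0"
    by (simp add: funpow_Suc_right pderiv_iter_zero pderiv_pCons del: funpow.simps)
  finally show ?thesis .
qed

lemma L_He_He: "Lt 0 (He n * He m) = (if n = m then fact n else 0)"
proof -
  have gen: "Lt 0 (He n * He m) = (if n = m then fact n else 0)" if "m \<le> n" for n m
  proof (cases "m = n")
    case True
    have "Lt 0 (He n * He m) = Lt 0 ((pderiv ^^ n) (He (0 + n)))" using True L_He_mult by simp
    also have "(pderiv ^^ n) (He (0 + n)) = smult (fact n) 1"
      using pderiv_iter_He[of n 0] by simp
    also have "Lt 0 (smult (fact n) 1) = fact n"
      unfolding Lt_smult Lt_one by simp
    finally show ?thesis using True by simp
  next
    case False
    then show ?thesis using that L_He_mult[of n "He m"] pderiv_iter_He_gt[of m n] by simp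
  qed
  show ?thesis
  proof (cases "m \<le> n")
    case True then show ?thesis by (rule gen)
  next
    case False then show ?thesis using gen[of n m] by (simp add: mult.commute)
  qed
qed



abbreviation phi :: "real \<Rightarrow> real" where "phi \<equiv> normal_density 0 1"

definition Pt :: "nat set \<Rightarrow> real \<Rightarrow> real poly" where
  "Pt K t = (\<Sum>n\<in>K. smult (t ^ n / fact n) (He n))"

lemma sq_pow: "t ^ n * t ^ n = (t^2) ^ n" for t :: real
  by (simp add: power_mult_distrib[symmetric] power2_eq_square)

lemma Pt_Lt: assumes "finite K"
  shows "Lt t (Pt K t) = exp (t^2 / 2) * (\<Sum>n\<in>K. (t^2) ^ n / fact n)"
  unfolding Pt_def using assms
  by (simp add: Lt_sum Lt_smult Lt_He sum_distrib_left sq_pow[symmetric] mult_ac)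

lemma Pt_L0: assumes "finite K" "0 \<in> K"
  shows "Lt 0 (Pt K t) = 1"
proof -
  have "Lt 0 (Pt K t) = (\<Sum>n\<in>K. t ^ n / fact n * 0 ^ n)"
    unfolding Pt_def using assms by (simp add: Lt_sum Lt_smult Lt_He)
  also have "\<dots> = (\<Sum>n\<in>K. if n = 0 then 1 else 0)"
    by (intro sum.cong) auto
  also have "\<dots> = 1" using assms by simp
  finally show ?thesis .
qed

lemma Pt_L0_sq: assumes "finite K"
  shows "Lt 0 (Pt K t * Pt K t) = (\<Sum>n\<in>K. (t^2) ^ n / fact n)"
proof -
  have "Pt K t * Pt K t = (\<Sum>n\<in>K. \<Sum>m\<in>K. smult (t ^ n / fact n * (t ^ m / fact m)) (He n * He m))"
    unfolding Pt_def sum_product by (intro sum.cong refl) (simp add: mult_smult_left mult_smult_right mult_ac)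
  then have "Lt 0 (Pt K t * Pt K t) = (\<Sum>n\<in>K. \<Sum>m\<in>K. t ^ n / fact n * (t ^ m / fact m) * (if n = m then fact n else 0))"
    using assms by (simp add: Lt_sum Lt_smult L_He_He)
  also have "\<dots> = (\<Sum>n\<in>K. t ^ n / fact n * (t ^ n / fact n) * fact n)"
    using assms by (intro sum.cong refl) (simp add: if_distrib sum.delta cong: if_cong)
  also have "\<dots> = (\<Sum>n\<in>K. (t^2) ^ n / fact n)"
    by (intro sum.cong refl) (simp add: sq_pow[symmetric] field_simps)
  finally show ?thesis .
qed

lemma h_integrals:
  fixes t :: real and K :: "nat set"
  assumes "finite K" "0 \<in> K"
  defines "h \<equiv> (\<lambda>y. exp (t * y) - exp (t^2 / 2) * poly (Pt K t) y)"
  defines "S \<equiv> (\<Sum>n\<in>K. (t^2) ^ n / fact n)"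
  shows "integrable lborel (\<lambda>y. h y ^ 2 * phi y)"
    and "(\<integral>y. h y ^ 2 * phi y \<partial>lborel) = exp (t^2) * (exp (t^2) - S)"
    and "integrable lborel (\<lambda>y. h y * phi y)"
    and "(\<integral>y. h y * phi y \<partial>lborel) = 0"
proof -
  let ?P = "Pt K t"
  have eq2: "(\<lambda>y. h y ^ 2 * phi y) = (\<lambda>y. (exp ((2 * t) * y) * poly 1 y * phi y
      - 2 * exp (t^2 / 2) * (exp (t * y) * poly ?P y * phi y))
      + exp (t^2) * (exp (0 * y) * poly (?P * ?P) y * phi y))"
  proof
    fix y
    have "exp ((2 * t) * y) = exp (t * y) * exp (t * y)" unfolding mult_exp_exp by simp
    moreover have "exp (t^2) = exp (t^2 / 2) * exp (t^2 / 2)" unfolding mult_exp_exp by simp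
    ultimately show "h y ^ 2 * phi y = (exp ((2 * t) * y) * poly 1 y * phi y
      - 2 * exp (t^2 / 2) * (exp (t * y) * poly ?P y * phi y))
      + exp (t^2) * (exp (0 * y) * poly (?P * ?P) y * phi y)"
      unfolding h_def by (simp add: power2_eq_square algebra_simps)
  qed
  show i2: "integrable lborel (\<lambda>y. h y ^ 2 * phi y)"
    unfolding eq2 by (intro Bochner_Integration.integrable_add Bochner_Integration.integrable_diff integrable_mult_right integrable_Lt)
  have "(\<integral>y. h y ^ 2 * phi y \<partial>lborel) = (Lt (2 * t) 1 - 2 * exp (t^2 / 2) * Lt t ?P) + exp (t^2) * Lt 0 (?P * ?P)"
    unfolding eq2 Lt_def
    by (subst Bochner_Integration.integral_add, (intro Bochner_Integration.integrable_add Bochner_Integration.integrable_diff integrable_mult_right integrable_Lt)+)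
       (subst Bochner_Integration.integral_diff, (intro Bochner_Integration.integrable_add Bochner_Integration.integrable_diff integrable_mult_right integrable_Lt)+, simp)
  also have "\<dots> = exp (2 * t^2) - 2 * exp (t^2 / 2) * (exp (t^2 / 2) * S) + exp (t^2) * S"
    using assms by (simp add: Lt_one Pt_Lt Pt_L0_sq S_def power_mult_distrib)
  also have "\<dots> = exp (t^2) * (exp (t^2) - S)"
  proof -
    have "exp (2 * t^2) = exp (t^2) * exp (t^2)" unfolding mult_exp_exp by simp
    moreover have "exp (t^2) = exp (t^2 / 2) * exp (t^2 / 2)" unfolding mult_exp_exp by simp
    ultimately show ?thesis by (simp add: algebra_simps)
  qed
  finally show "(\<integral>y. h y ^ 2 * phi y \<partial>lborel) = exp (t^2) * (exp (t^2) - S)" .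
  have eq1: "(\<lambda>y. h y * phi y) = (\<lambda>y. exp (t * y) * poly 1 y * phi y
      - exp (t^2 / 2) * (exp (0 * y) * poly ?P y * phi y))"
    unfolding h_def by (simp add: algebra_simps)
  show "integrable lborel (\<lambda>y. h y * phi y)"
    unfolding eq1 by (intro Bochner_Integration.integrable_diff integrable_mult_right integrable_Lt)
  have "(\<integral>y. h y * phi y \<partial>lborel) = Lt t 1 - exp (t^2 / 2) * Lt 0 ?P"
    unfolding eq1 Lt_def
    by (subst Bochner_Integration.integral_diff, (intro integrable_mult_right integrable_Lt)+, simp)
  also have "\<dots> = 0" using assms by (simp add: Lt_one Pt_L0)
  finally show "(\<integral>y. h y * phi y \<partial>lborel) = 0" .
qed


lemma amgm_abs: "\<bar>a * b\<bar> \<le> (a^2 + b^2) / 2" for a b :: real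
proof -
  have "0 \<le> (\<bar>a\<bar> - \<bar>b\<bar>)^2" by simp
  then show ?thesis by (simp add: power2_eq_square abs_mult algebra_simps)
qed

lemma amgm_lam: "0 < l \<Longrightarrow> a * b \<le> (l * a^2 + b^2 / l) / 2" for a b l :: real
proof -
  assume l: "0 < l"
  have "0 \<le> (l * a - b)^2 / l" using l by simp
  also have "(l * a - b)^2 / l = l * a^2 - 2 * a * b + b^2 / l"
    using l by (simp add: power2_eq_square field_simps)
  finally show ?thesis by simp
qed

lemma CS_integrable:
  fixes r g :: "real \<Rightarrow> real"
  assumes [measurable]: "r \<in> borel_measurable borel" "g \<in> borel_measurable borel"
    and ir: "integrable lborel (\<lambda>y. r y ^ 2 * phi y)"
    and ig: "integrable lborel (\<lambda>y. g y ^ 2 * phi y)"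
  shows "integrable lborel (\<lambda>y. r y * g y * phi y)"
proof (rule Bochner_Integration.integrable_bound)
  show "integrable lborel (\<lambda>y. (r y ^ 2 * phi y + g y ^ 2 * phi y) / 2)"
    using ir ig by (intro integrable_divide Bochner_Integration.integrable_add)
  show "(\<lambda>y. r y * g y * phi y) \<in> borel_measurable lborel" by measurable
  show "AE y in lborel. norm (r y * g y * phi y) \<le> norm ((r y ^ 2 * phi y + g y ^ 2 * phi y) / 2)"
  proof (intro AE_I2)
    fix y
    have "norm (r y * g y * phi y) = \<bar>r y * g y\<bar> * phi y" by (simp add: abs_mult)
    also have "\<dots> \<le> ((r y)^2 + (g y)^2) / 2 * phi y"
      by (intro mult_right_mono amgm_abs) simp
    also have "\<dots> \<le> norm ((r y ^ 2 * phi y + g y ^ 2 * phi y) / 2)"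
      by (simp add: algebra_simps)
    finally show "norm (r y * g y * phi y) \<le> norm ((r y ^ 2 * phi y + g y ^ 2 * phi y) / 2)" .
  qed
qed

lemma integrable_phi: "integrable lborel phi"
  using integrable_Lt[of 0 1] by simp

lemma CS_integrable1:
  fixes r :: "real \<Rightarrow> real"
  assumes [measurable]: "r \<in> borel_measurable borel"
    and ir: "integrable lborel (\<lambda>y. r y ^ 2 * phi y)"
  shows "integrable lborel (\<lambda>y. r y * phi y)"
  using CS_integrable[of r "\<lambda>_. 1", OF assms(1) _ ir] integrable_phi by simp



theorem theorem9:
  fixes M :: "'a measure" and Y :: "'a \<Rightarrow> real" and p :: "real \<Rightarrow> real"
    and J :: "nat set"
  assumes "prob_space M"
    and "p \<in> borel_measurable borel" and "\<And>x. p x \<ge> 0"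
    and "distributed M lborel Y (\<lambda>x. ennreal (p x))"
    and "chi2_density p < \<infinity>"
    and "0 \<notin> J"
    and "\<And>n. n \<in> J \<Longrightarrow> prob_space.expectation M (\<lambda>\<omega>. hermite n (Y \<omega>)) = 0"
    and "chi2_density p < (INF x\<in>{0<..}. threshold_ratio J x)"
  shows "\<forall>t::real. t \<noteq> 0 \<longrightarrow> (\<integral>\<^sup>+ \<omega>. ennreal (exp (t * Y \<omega>)) \<partial>M) < ennreal (exp (t^2))"
proof (intro allI impI)
  fix t :: real assume t0: "t \<noteq> 0"
  interpret P: prob_space M by fact
  note pm[measurable] = assms(2)
  define x where "x = t^2"
  have xpos: "0 < x" using t0 by (simp add: x_def)
  define R where "R = exp (x/2) - 1"
  have Rpos: "0 < R" using xpos by (simp add: R_def)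
  define g where "g = (\<lambda>y. p y / phi y - 1)"
  have phipos: "\<And>y. 0 < phi y" by (simp add: normal_density_pos)
  have g_meas[measurable]: "g \<in> borel_measurable borel" unfolding g_def by measurable
  have p_eq: "p y = g y * phi y + phi y" for y
  proof -
    have "phi y \<noteq> 0" using phipos[of y] by simp
    then show ?thesis by (simp add: g_def field_simps)
  qed
  have chi2_eq: "chi2_density p = (\<integral>\<^sup>+y. ennreal (g y ^ 2 * phi y) \<partial>lborel)"
    unfolding chi2_density_def g_def std_normal_density_eq ..
  have g2_int: "integrable lborel (\<lambda>y. g y ^ 2 * phi y)"
  proof (rule integrableI_bounded)
    show "(\<lambda>y. g y ^ 2 * phi y) \<in> borel_measurable lborel" by measurable
    have "(\<integral>\<^sup>+y. ennreal (norm (g y ^ 2 * phi y)) \<partial>lborel) = chi2_density p"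
      unfolding chi2_eq by (intro nn_integral_cong) simp
    then show "(\<integral>\<^sup>+y. ennreal (norm (g y ^ 2 * phi y)) \<partial>lborel) < \<infinity>" using assms(5) by simp
  qed
  define C where "C = (\<integral>y. g y ^ 2 * phi y \<partial>lborel)"
  have C_nonneg: "0 \<le> C" unfolding C_def by (intro integral_nonneg_AE) simp
  have chi2_C: "chi2_density p = ennreal C"
    unfolding chi2_eq C_def by (rule nn_integral_eq_integral[OF g2_int]) simp

  define a where "a = (\<lambda>n. if n \<in> J then x ^ n / fact n else 0)"
  have summ: "summable a"
  proof (rule summable_comparison_test)
    show "\<exists>N. \<forall>n\<ge>N. norm (a n) \<le> inverse (fact n) * x ^ n"
      using xpos by (auto simp: a_def divide_inverse mult.commute)
    show "summable (\<lambda>n. inverse (fact n) * x ^ n)" by (rule summable_exp)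
  qed
  define D where "D = exp x - 1 - suminf a"
  have thr: "threshold_ratio J x = (if D = 0 then \<infinity> else ennreal (R^2 / D))"
    unfolding threshold_ratio_def Let_def D_def a_def R_def by simp
  have Cless: "ennreal C < threshold_ratio J x"
  proof -
    have "(INF x\<in>{0<..}. threshold_ratio J x) \<le> threshold_ratio J x"
      by (rule INF_lower) (simp add: xpos)
    then show ?thesis using assms(8) chi2_C by simp
  qed
  have CD: "C * D < R^2"
  proof (cases "D = 0")
    case True then show ?thesis using Rpos by simp
  next
    case False
    then have "ennreal C < ennreal (R^2 / D)" using Cless thr by simp
    then have lt: "C < R^2 / D" using C_nonneg by (simp add: ennreal_less_iff)
    have Dpos: "D > 0"
    proof (rule ccontr)
      assume "\<not> D > 0"
      then have "R^2 / D \<le> 0" by (simp add: divide_nonneg_nonpos)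
      then show False using lt C_nonneg by simp
    qed
    then show ?thesis using lt by (simp add: pos_less_divide_eq)
  qed
  have lim: "(\<lambda>N. C * (exp x - 1 - (\<Sum>n<N. a n))) \<longlonglongrightarrow> C * D"
    unfolding D_def by (intro tendsto_intros summable_LIMSEQ summ)
  then have "eventually (\<lambda>N. C * (exp x - 1 - (\<Sum>n<N. a n)) < R^2) sequentially"
    using CD by (rule order_tendstoD)
  then obtain N where N: "C * (exp x - 1 - (\<Sum>n<N. a n)) < R^2"
    by (auto simp: eventually_sequentially)
  define F where "F = {n \<in> J. n < N}"
  define K where "K = insert 0 F"
  have finF: "finite F" by (simp add: F_def)
  have finK: "finite K" "0 \<in> K" by (auto simp: K_def finF)
  have F0: "0 \<notin> F" using assms(6) by (auto simp: F_def)
  define S where "S = (\<Sum>n\<in>K. x ^ n / fact n)"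
  have S_eq: "S = 1 + (\<Sum>n<N. a n)"
  proof -
    have "(\<Sum>n<N. a n) = (\<Sum>n\<in>{..<N} \<inter> J. x ^ n / fact n)"
      unfolding a_def by (rule sum.inter_restrict[symmetric]) simp
    also have "{..<N} \<inter> J = F" by (auto simp: F_def)
    finally show ?thesis unfolding S_def K_def using F0 finF by simp
  qed
  have eS: "exp x - S = exp x - 1 - (\<Sum>n<N. a n)" using S_eq by simp
  have CS: "C * (exp x - S) < R^2" unfolding eS by (rule N)

  define h where "h = (\<lambda>y. exp (t * y) - exp (t^2 / 2) * poly (Pt K t) y)"
  have h_meas[measurable]: "h \<in> borel_measurable borel"
    unfolding h_def by (intro borel_measurable_continuous_onI continuous_intros)
  note hI = h_integrals[OF finK(1) finK(2), of t]
  have h2_int: "integrable lborel (\<lambda>y. h y ^ 2 * phi y)"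
    using hI(1) unfolding h_def .
  define A where "A = (\<integral>y. h y ^ 2 * phi y \<partial>lborel)"
  have A_eq: "A = exp x * (exp x - S)"
    using hI(2) unfolding A_def h_def S_def x_def .
  have A_nonneg: "0 \<le> A" unfolding A_def by (intro integral_nonneg_AE) simp
  have h1_int: "integrable lborel (\<lambda>y. h y * phi y)"
    using hI(3) unfolding h_def .
  have h1_0: "(\<integral>y. h y * phi y \<partial>lborel) = 0"
    using hI(4) unfolding h_def .
  have hg_int: "integrable lborel (\<lambda>y. h y * g y * phi y)"
    by (rule CS_integrable[OF h_meas g_meas h2_int g2_int])
  have rp: "integrable lborel (\<lambda>y. r y * p y)"
    if [measurable]: "r \<in> borel_measurable borel" and ir: "integrable lborel (\<lambda>y. r y ^ 2 * phi y)" for r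
  proof -
    have "integrable lborel (\<lambda>y. r y * g y * phi y + r y * phi y)"
      by (intro Bochner_Integration.integrable_add CS_integrable[OF that(1) g_meas ir g2_int] CS_integrable1[OF that(1) ir])
    moreover have "(\<lambda>y. r y * g y * phi y + r y * phi y) = (\<lambda>y. r y * p y)"
      by (simp add: p_eq algebra_simps)
    ultimately show ?thesis by simp
  qed
  have He_p: "integrable lborel (\<lambda>y. poly (He n) y * p y)" for n
  proof (rule rp)
    show "(\<lambda>y. poly (He n) y) \<in> borel_measurable borel"
      by (intro borel_measurable_continuous_onI continuous_intros)
    have "(\<lambda>y. (poly (He n) y)^2 * phi y) = (\<lambda>y. exp (0 * y) * poly (He n * He n) y * phi y)"
      by (simp add: power2_eq_square)
    then show "integrable lborel (\<lambda>y. (poly (He n) y)^2 * phi y)"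
      using integrable_Lt[of 0 "He n * He n"] by simp
  qed
  have exp_p: "integrable lborel (\<lambda>y. exp (t * y) * p y)"
  proof (rule rp)
    show "(\<lambda>y. exp (t * y)) \<in> borel_measurable borel" by measurable
    have "(\<lambda>y. (exp (t * y))^2 * phi y) = (\<lambda>y. exp ((2 * t) * y) * poly 1 y * phi y)"
      by (rule ext) (simp add: power2_eq_square mult_exp_exp)
    then show "integrable lborel (\<lambda>y. (exp (t * y))^2 * phi y)"
      using integrable_Lt[of "2 * t" 1] by simp
  qed
  have He_int: "(\<integral>y. poly (He n) y * p y \<partial>lborel) = (if n = 0 then 1 else 0)" if "n \<in> K" for n
  proof -
    have hm0: "(\<lambda>y. poly (He n) y) \<in> borel_measurable borel"
      by (intro borel_measurable_continuous_onI continuous_intros)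
    then have hm: "(\<lambda>y. poly (He n) y) \<in> borel_measurable lborel" by simp
    have "(\<integral>y. poly (He n) y * p y \<partial>lborel) = (\<integral>y. p y * poly (He n) y \<partial>lborel)"
      by (simp add: mult.commute)
    also have "\<dots> = (\<integral>\<omega>. poly (He n) (Y \<omega>) \<partial>M)"
      by (rule distributed_integral[OF assms(4) hm]) (simp add: assms(3))
    also have "\<dots> = (if n = 0 then 1 else 0)"
    proof (cases "n = 0")
      case True
      then show ?thesis using P.prob_space by simp
    next
      case False
      then have "n \<in> J" using that by (auto simp: K_def F_def)
      then show ?thesis using assms(7)[of n] False by (simp add: hermite_He)
    qed
    finally show ?thesis .
  qed
  have P_p_int: "integrable lborel (\<lambda>y. poly (Pt K t) y * p y)"
    and P_p: "(\<integral>y. poly (Pt K t) y * p y \<partial>lborel) = 1"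
  proof -
    have eqP: "(\<lambda>y. poly (Pt K t) y * p y) = (\<lambda>y. \<Sum>n\<in>K. t ^ n / fact n * (poly (He n) y * p y))"
      by (rule ext) (simp add: Pt_def poly_sum sum_distrib_right mult.assoc)
    show "integrable lborel (\<lambda>y. poly (Pt K t) y * p y)"
      unfolding eqP by (intro Bochner_Integration.integrable_sum integrable_mult_right He_p)
    have "(\<integral>y. poly (Pt K t) y * p y \<partial>lborel) = (\<Sum>n\<in>K. t ^ n / fact n * (\<integral>y. poly (He n) y * p y \<partial>lborel))"
      unfolding eqP by (subst Bochner_Integration.integral_sum) (auto intro!: integrable_mult_right He_p)
    also have "\<dots> = (\<Sum>n\<in>K. if n = 0 then 1 else 0)"
      by (intro sum.cong refl) (simp add: He_int)
    also have "\<dots> = 1" using finK by simp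
    finally show "(\<integral>y. poly (Pt K t) y * p y \<partial>lborel) = 1" .
  qed
  define E where "E = (\<integral>y. exp (t * y) * p y \<partial>lborel)"
  have hp_eq: "(\<lambda>y. h y * p y) = (\<lambda>y. exp (t * y) * p y - exp (t^2 / 2) * (poly (Pt K t) y * p y))"
    unfolding h_def by (simp add: algebra_simps)
  have hp_int: "integrable lborel (\<lambda>y. h y * p y)"
    unfolding hp_eq by (intro Bochner_Integration.integrable_diff integrable_mult_right exp_p P_p_int)
  have hp: "(\<integral>y. h y * p y \<partial>lborel) = E - exp (x / 2)"
    unfolding hp_eq E_def x_def
    by (subst Bochner_Integration.integral_diff) (auto intro!: integrable_mult_right exp_p P_p_int simp: P_p)
  have hg: "(\<integral>y. h y * g y * phi y \<partial>lborel) = E - exp (x / 2)"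
  proof -
    have "(\<lambda>y. h y * g y * phi y) = (\<lambda>y. h y * p y - h y * phi y)"
      by (simp add: p_eq algebra_simps)
    then have "(\<integral>y. h y * g y * phi y \<partial>lborel) = (\<integral>y. h y * p y \<partial>lborel) - (\<integral>y. h y * phi y \<partial>lborel)"
      using Bochner_Integration.integral_diff[OF hp_int h1_int] by simp
    then show ?thesis using hp h1_0 by simp
  qed
  have bound: "E - exp (x / 2) \<le> l / 2 * A + C / (2 * l)" if l: "0 < l" for l
  proof -
    have "(\<integral>y. h y * g y * phi y \<partial>lborel) \<le> (\<integral>y. l / 2 * (h y ^ 2 * phi y) + 1 / (2 * l) * (g y ^ 2 * phi y) \<partial>lborel)"
    proof (rule integral_mono)
      show "integrable lborel (\<lambda>y. h y * g y * phi y)" by (rule hg_int)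
      show "integrable lborel (\<lambda>y. l / 2 * (h y ^ 2 * phi y) + 1 / (2 * l) * (g y ^ 2 * phi y))"
        by (intro Bochner_Integration.integrable_add integrable_mult_right h2_int g2_int)
      fix y
      have "h y * g y \<le> (l * (h y)^2 + (g y)^2 / l) / 2" by (rule amgm_lam[OF l])
      then have "h y * g y * phi y \<le> (l * (h y)^2 + (g y)^2 / l) / 2 * phi y"
        by (intro mult_right_mono) simp_all
      also have "\<dots> = l / 2 * (h y ^ 2 * phi y) + 1 / (2 * l) * (g y ^ 2 * phi y)"
        by (simp add: field_simps)
      finally show "h y * g y * phi y \<le> l / 2 * (h y ^ 2 * phi y) + 1 / (2 * l) * (g y ^ 2 * phi y)" .
    qed
    also have "\<dots> = l / 2 * A + C / (2 * l)"
      unfolding A_def C_def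
      by (subst Bochner_Integration.integral_add) (auto intro!: integrable_mult_right h2_int g2_int)
    finally show ?thesis using hg by simp
  qed
  define Q where "Q = exp (x / 2) * R"
  have Qpos: "0 < Q" using Rpos by (simp add: Q_def)
  have ex2: "exp x = exp (x / 2) * exp (x / 2)" unfolding mult_exp_exp by simp
  have CA: "C * A < Q^2"
  proof -
    have "C * A = exp x * (C * (exp x - S))" by (simp add: A_eq algebra_simps)
    also have "\<dots> < exp x * R^2" using CS by simp
    also have "\<dots> = Q^2" by (simp add: Q_def ex2 power2_eq_square algebra_simps)
    finally show ?thesis .
  qed
  have EQ: "E - exp (x / 2) < Q"
  proof (cases "A = 0")
    case True
    define l where "l = (C + 1) / Q"
    have lpos: "0 < l" using Qpos C_nonneg by (simp add: l_def)
    have "E - exp (x / 2) \<le> C / (2 * l)" using bound[OF lpos] True by simp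
    also have "C / (2 * l) = C * Q / (2 * (C + 1))" using Qpos C_nonneg by (simp add: l_def field_simps)
    also have "\<dots> < Q"
    proof -
      have "0 \<le> C * Q" using Qpos C_nonneg by simp
      then have "C * Q < 2 * (C + 1) * Q" using Qpos by (simp add: algebra_simps)
      then show ?thesis using C_nonneg by (simp add: pos_divide_less_eq mult.commute)
    qed
    finally show ?thesis .
  next
    case False
    then have Apos: "0 < A" using A_nonneg by simp
    define l where "l = Q / A"
    have lpos: "0 < l" using Qpos Apos by (simp add: l_def)
    have "E - exp (x / 2) \<le> l / 2 * A + C / (2 * l)" by (rule bound[OF lpos])
    also have "\<dots> = Q / 2 + C * A / (2 * Q)" using Qpos Apos by (simp add: l_def field_simps)
    also have "C * A / (2 * Q) < Q / 2"
      using CA Qpos by (simp add: pos_divide_less_eq power2_eq_square field_simps)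
    finally show ?thesis by simp
  qed
  have E_lt: "E < exp (t^2)"
  proof -
    have "E < exp (x / 2) + Q" using EQ by simp
    also have "\<dots> = exp x" by (simp add: Q_def R_def ex2 algebra_simps)
    finally show ?thesis by (simp add: x_def)
  qed
  have E_nonneg: "0 \<le> E" unfolding E_def by (intro integral_nonneg_AE) (simp add: assms(3))
  have "(\<integral>\<^sup>+ \<omega>. ennreal (exp (t * Y \<omega>)) \<partial>M) = (\<integral>\<^sup>+y. ennreal (p y) * ennreal (exp (t * y)) \<partial>lborel)"
    by (rule distributed_nn_integral[OF assms(4), symmetric]) measurable
  also have "\<dots> = (\<integral>\<^sup>+y. ennreal (exp (t * y) * p y) \<partial>lborel)"
    by (intro nn_integral_cong) (simp add: ennreal_mult'' assms(3) mult.commute)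
  also have "\<dots> = ennreal E"
    unfolding E_def by (rule nn_integral_eq_integral[OF exp_p]) (simp add: assms(3))
  also have "\<dots> < ennreal (exp (t^2))"
    using E_lt E_nonneg by (simp add: ennreal_less_iff)
  finally show "(\<integral>\<^sup>+ \<omega>. ennreal (exp (t * Y \<omega>)) \<partial>M) < ennreal (exp (t^2))" .
qed

end
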